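(* Let $G_1$ be a graph isomorphic to a minor of a weakly 4-connected graph $H$. Let $P=\{p_1,p_2\}$, $Q=\{q_1,q_2,q_3\}$ and $R$ form a partition of $V(G_1)$ such that $G_1$ contains all edges between $P$ and $Q$, no edge has both ends in $Q$, $|R|\ge2$, and $(P\cup Q,\,Q\cup R)$ is a non-trivial separation of $G_1$ of order three. Then $H$ has a minor isomorphic to a graph $G_1^+$ obtained from $G_1$ by either (1) adding an edge between $p_i$ and $r$ for some $i\in\{1,2\}$ and some $r\in R$, or (2) splitting $q_j$, for some $j\in\{1,2,3\}$, into two adjacent vertices $q_j^1,q_j^2$ such that $q_j^1$ is adjacent to $p_1$ and $q_j^2$ is adjacent to $p_2$.
   Context: Graphs are finite and simple. A separation of $G$ is a pair $(A,B)$ of subsets of $V(G)$ with $A\cup B=V(G)$ and no edge between $A-B$ and $B-A$; its order is $|A\cap B|$; it is non-trivial if $A\ne V(G)\ne B$. A graph is weakly 4-connected if it is 3-connected, has at least five vertices, and for every separation $(A,B)$ of order at most three one of $G[A]$, $G[B]$ has at most four edges. Splitting a vertex $v$: for a partition $(N_1,N_2)$ of the neighbours of $v$ with $|N_1|,|N_2|\ge2$, replace $v$ by two adjacent new vertices $v_1,v_2$ with $v_i$ adjacent to exactly the vertices of $N_i$. *)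

theory Defs
  imports Main
begin

definition simple_graph :: "'a set \<Rightarrow> 'a set set \<Rightarrow> bool" where
  "simple_graph V E \<longleftrightarrow> finite V \<and>
     (\<forall>e\<in>E. \<exists>u v. u \<noteq> v \<and> u \<in> V \<and> v \<in> V \<and> e = {u, v})"

definition connected_in :: "'a set set \<Rightarrow> 'a set \<Rightarrow> bool" where
  "connected_in E S \<longleftrightarrow> S \<noteq> {} \<and>
     (\<forall>u\<in>S. \<forall>v\<in>S. (u, v) \<in> {(x, y). {x, y} \<in> E \<and> x \<in> S \<and> y \<in> S}\<^sup>*)"

definition k_connected :: "nat \<Rightarrow> 'a set \<Rightarrow> 'a set set \<Rightarrow> bool" where
  "k_connected k V E \<longleftrightarrow> card V > k \<and>
     (\<forall>X. X \<subseteq> V \<and> card X < k \<longrightarrow> connected_in E (V - X))"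

definition separation :: "'a set \<Rightarrow> 'a set set \<Rightarrow> 'a set \<Rightarrow> 'a set \<Rightarrow> bool" where
  "separation V E A B \<longleftrightarrow> A \<subseteq> V \<and> B \<subseteq> V \<and> A \<union> B = V \<and>
     (\<forall>u\<in>A - B. \<forall>v\<in>B - A. {u, v} \<notin> E)"

definition sep_order :: "'a set \<Rightarrow> 'a set \<Rightarrow> nat" where
  "sep_order A B = card (A \<inter> B)"

definition nontrivial_sep :: "'a set \<Rightarrow> 'a set \<Rightarrow> 'a set \<Rightarrow> bool" where
  "nontrivial_sep V A B \<longleftrightarrow> A \<noteq> V \<and> B \<noteq> V"

definition induced_edge_count :: "'a set set \<Rightarrow> 'a set \<Rightarrow> nat" where
  "induced_edge_count E A = card {e \<in> E. e \<subseteq> A}"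

definition weakly_4_connected :: "'a set \<Rightarrow> 'a set set \<Rightarrow> bool" where
  "weakly_4_connected V E \<longleftrightarrow> k_connected 3 V E \<and> card V \<ge> 5 \<and>
     (\<forall>A B. separation V E A B \<and> sep_order A B \<le> 3 \<longrightarrow>
        induced_edge_count E A \<le> 4 \<or> induced_edge_count E B \<le> 4)"

(* H contains a minor isomorphic to G, expressed by a minor model (branch sets):
   disjoint nonempty connected vertex sets of H, one per vertex of G,
   with an H-edge between the branch sets of every edge of G. *)
definition has_minor :: "'b set \<Rightarrow> 'b set set \<Rightarrow> 'a set \<Rightarrow> 'a set set \<Rightarrow> bool" where
  "has_minor VH EH VG EG \<longleftrightarrow> (\<exists>\<beta> :: 'a \<Rightarrow> 'b set.
     (\<forall>v\<in>VG. \<beta> v \<subseteq> VH \<and> connected_in EH (\<beta> v)) \<and>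
     (\<forall>u\<in>VG. \<forall>v\<in>VG. u \<noteq> v \<longrightarrow> \<beta> u \<inter> \<beta> v = {}) \<and>
     (\<forall>u v. {u, v} \<in> EG \<longrightarrow> (\<exists>x\<in>\<beta> u. \<exists>y\<in>\<beta> v. {x, y} \<in> EH)))"

definition neighbours :: "'a set set \<Rightarrow> 'a \<Rightarrow> 'a set" where
  "neighbours E v = {u. {v, u} \<in> E}"

(* Old vertices x become (x, False); v is replaced by v1 = (v, False) adjacent to N1
   and v2 = (v, True) adjacent to N2, and v1 v2 are adjacent. *)
definition split_V :: "'a set \<Rightarrow> 'a \<Rightarrow> ('a \<times> bool) set" where
  "split_V V v = (\<lambda>x. (x, False)) ` (V - {v}) \<union> {(v, False), (v, True)}"

definition split_E :: "'a set set \<Rightarrow> 'a \<Rightarrow> 'a set \<Rightarrow> 'a set \<Rightarrow> ('a \<times> bool) set set" where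
  "split_E E v N1 N2 =
     {{(a, False), (b, False)} | a b. {a, b} \<in> E \<and> a \<noteq> v \<and> b \<noteq> v}
     \<union> {{(v, False), (v, True)}}
     \<union> {{(v, False), (n, False)} | n. n \<in> N1}
     \<union> {{(v, True), (n, False)} | n. n \<in> N2}"

definition valid_split :: "'a set set \<Rightarrow> 'a \<Rightarrow> 'a set \<Rightarrow> 'a set \<Rightarrow> bool" where
  "valid_split E v N1 N2 \<longleftrightarrow> N1 \<union> N2 = neighbours E v \<and> N1 \<inter> N2 = {} \<and>
     card N1 \<ge> 2 \<and> card N2 \<ge> 2"

end

theory Submission
  imports Defs
begin


definition crel :: "'a set set \<Rightarrow> 'a set \<Rightarrow> ('a \<times> 'a) set" where
  "crel E S = {(x, y). {x, y} \<in> E \<and> x \<in> S \<and> y \<in> S}"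

definition adj :: "'a set set \<Rightarrow> 'a set \<Rightarrow> 'a set \<Rightarrow> bool" where
  "adj E X Y \<longleftrightarrow> (\<exists>x\<in>X. \<exists>y\<in>Y. {x, y} \<in> E)"

lemma connected_in_crel:
  "connected_in E S \<longleftrightarrow> S \<noteq> {} \<and> (\<forall>u\<in>S. \<forall>v\<in>S. (u, v) \<in> (crel E S)\<^sup>*)"
  by (simp add: connected_in_def crel_def)

lemma crel_sym: "sym (crel E S)"
  by (auto simp: sym_def crel_def insert_commute)

lemma crel_rtrancl_sym: "(u, v) \<in> (crel E S)\<^sup>* \<Longrightarrow> (v, u) \<in> (crel E S)\<^sup>*"
  using sym_rtrancl[OF crel_sym[of E S]] unfolding sym_def by blast

lemma crel_mono: "S \<subseteq> T \<Longrightarrow> crel E S \<subseteq> crel E T"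
  by (auto simp: crel_def)

lemma adj_sym: "adj E X Y = adj E Y X"
  unfolding adj_def by (metis insert_commute)

lemma adj_mono: "adj E X Y \<Longrightarrow> X \<subseteq> X' \<Longrightarrow> Y \<subseteq> Y' \<Longrightarrow> adj E X' Y'"
  by (auto simp: adj_def)

lemma connected_single: "connected_in E {v}"
  by (simp add: connected_in_def)

lemma conn_union:
  assumes S: "connected_in E S" and T: "connected_in E T" and a: "adj E S T"
  shows "connected_in E (S \<union> T)"
proof -
  let ?r = "crel E (S \<union> T)"
  have sS: "\<And>u v. u \<in> S \<Longrightarrow> v \<in> S \<Longrightarrow> (u, v) \<in> ?r\<^sup>*"
    using S rtrancl_mono[OF crel_mono[of S "S \<union> T" E]] by (auto simp: connected_in_crel)
  have tT: "\<And>u v. u \<in> T \<Longrightarrow> v \<in> T \<Longrightarrow> (u, v) \<in> ?r\<^sup>*"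
    using T rtrancl_mono[OF crel_mono[of T "S \<union> T" E]] by (auto simp: connected_in_crel)
  obtain x y where xy: "x \<in> S" "y \<in> T" "{x, y} \<in> E" using a by (auto simp: adj_def)
  have xyr: "(x, y) \<in> ?r" using xy by (auto simp: crel_def)
  have st: "\<And>u v. u \<in> S \<Longrightarrow> v \<in> T \<Longrightarrow> (u, v) \<in> ?r\<^sup>*"
  proof -
    fix u v assume "u \<in> S" "v \<in> T"
    hence "(u, x) \<in> ?r\<^sup>*" "(y, v) \<in> ?r\<^sup>*" using sS tT xy by auto
    thus "(u, v) \<in> ?r\<^sup>*" using xyr by (meson rtrancl.rtrancl_into_rtrancl rtrancl_trans)
  qed
  show ?thesis unfolding connected_in_crel
  proof (intro conjI ballI)
    show "S \<union> T \<noteq> {}" using S by (auto simp: connected_in_def)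
  next
    fix u v assume u: "u \<in> S \<union> T" and v: "v \<in> S \<union> T"
    show "(u, v) \<in> ?r\<^sup>*"
    proof (cases "u \<in> S")
      case True
      show ?thesis
      proof (cases "v \<in> S")
        case True thus ?thesis using \<open>u \<in> S\<close> sS by blast
      next
        case False thus ?thesis using \<open>u \<in> S\<close> v st by blast
      qed
    next
      case False
      hence uT: "u \<in> T" using u by blast
      show ?thesis
      proof (cases "v \<in> S")
        case True
        hence "(v, u) \<in> ?r\<^sup>*" using uT st by blast
        thus ?thesis by (rule crel_rtrancl_sym)
      next
        case False thus ?thesis using uT v tT by blast
      qed
    qed
  qed
qed

lemma edge_between:
  assumes S: "connected_in E S" and eq: "S = X \<union> Y" and d: "X \<inter> Y = {}"
    and X: "X \<noteq> {}" and Y: "Y \<noteq> {}"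
  shows "adj E X Y"
proof -
  obtain x0 y0 where x0: "x0 \<in> X" and y0: "y0 \<in> Y" using X Y by auto
  have path: "(x0, y0) \<in> (crel E S)\<^sup>*" using S x0 y0 eq by (auto simp: connected_in_crel)
  have "\<And>z. (x0, z) \<in> (crel E S)\<^sup>* \<Longrightarrow> z \<in> X \<or> adj E X Y"
  proof -
    fix z assume "(x0, z) \<in> (crel E S)\<^sup>*"
    thus "z \<in> X \<or> adj E X Y"
    proof (induction rule: rtrancl_induct)
      case base thus ?case using x0 by simp
    next
      case (step y z)
      thus ?case using eq by (auto simp: crel_def adj_def)
    qed
  qed
  thus ?thesis using path y0 d by blast
qed

lemma split_conn:
  assumes S: "connected_in E S" and a: "a \<in> S" and b: "b \<in> S" and ab: "a \<noteq> b"
  shows "\<exists>X Y. S = X \<union> Y \<and> X \<inter> Y = {} \<and> a \<in> X \<and> b \<in> Y \<and>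
           connected_in E X \<and> connected_in E Y"
proof -
  define S' where "S' = S - {a}"
  define C where "C = {v. (b, v) \<in> (crel E S')\<^sup>*}"
  have bC: "b \<in> C" by (simp add: C_def)
  have CS': "C \<subseteq> S'"
  proof
    fix v assume "v \<in> C"
    hence "(b, v) \<in> (crel E S')\<^sup>*" by (simp add: C_def)
    thus "v \<in> S'"
    proof (induction rule: rtrancl_induct)
      case base thus ?case using b ab by (simp add: S'_def)
    next
      case (step y z) thus ?case by (simp add: crel_def)
    qed
  qed
  have c1: "\<And>v. (b, v) \<in> (crel E S')\<^sup>* \<Longrightarrow> (b, v) \<in> (crel E C)\<^sup>*"
  proof -
    fix v assume "(b, v) \<in> (crel E S')\<^sup>*"
    thus "(b, v) \<in> (crel E C)\<^sup>*"
    proof (induction rule: rtrancl_induct)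
      case base thus ?case by simp
    next
      case (step y z)
      have "y \<in> C" using step.hyps(1) by (simp add: C_def)
      moreover have "z \<in> C" using step.hyps by (simp add: C_def)
      ultimately have "(y, z) \<in> crel E C" using step.hyps(2) by (simp add: crel_def)
      thus ?case using step.IH by (meson rtrancl.rtrancl_into_rtrancl)
    qed
  qed
  have Cconn: "connected_in E C"
    unfolding connected_in_crel
  proof (intro conjI ballI)
    show "C \<noteq> {}" using bC by auto
  next
    fix u v assume "u \<in> C" "v \<in> C"
    hence "(b, u) \<in> (crel E C)\<^sup>*" "(b, v) \<in> (crel E C)\<^sup>*" using c1 by (auto simp: C_def)
    thus "(u, v) \<in> (crel E C)\<^sup>*" using crel_rtrancl_sym rtrancl_trans by metis
  qed
  have c2: "\<And>v. (v, a) \<in> (crel E S)\<^sup>* \<Longrightarrow> v \<in> S - C \<Longrightarrow> (v, a) \<in> (crel E (S - C))\<^sup>*"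
  proof -
    fix v assume "(v, a) \<in> (crel E S)\<^sup>*"
    thus "v \<in> S - C \<Longrightarrow> (v, a) \<in> (crel E (S - C))\<^sup>*"
    proof (induction rule: converse_rtrancl_induct)
      case base thus ?case by simp
    next
      case (step v w)
      show ?case
      proof (cases "v = a")
        case True thus ?thesis by simp
      next
        case False
        have wS: "w \<in> S" and vw: "{v, w} \<in> E" using step.hyps(1) by (auto simp: crel_def)
        have "w \<notin> C"
        proof
          assume wC: "w \<in> C"
          hence "(b, w) \<in> (crel E S')\<^sup>*" by (simp add: C_def)
          moreover have "(w, v) \<in> crel E S'"
            using wC CS' False step.prems vw by (auto simp: crel_def S'_def insert_commute)
          ultimately have "v \<in> C" by (simp add: C_def)
          thus False using step.prems by simp
        qed
        hence "(v, w) \<in> crel E (S - C)" using step.prems wS vw by (simp add: crel_def)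
        thus ?thesis using step.IH wS \<open>w \<notin> C\<close> by (meson converse_rtrancl_into_rtrancl DiffI)
      qed
    qed
  qed
  have aX: "a \<in> S - C" using a CS' by (auto simp: S'_def)
  have Xconn: "connected_in E (S - C)"
    unfolding connected_in_crel
  proof (intro conjI ballI)
    show "S - C \<noteq> {}" using aX by auto
  next
    fix u v assume u: "u \<in> S - C" and v: "v \<in> S - C"
    have "(u, a) \<in> (crel E S)\<^sup>*" "(v, a) \<in> (crel E S)\<^sup>*" using S u v a by (auto simp: connected_in_crel)
    hence "(u, a) \<in> (crel E (S - C))\<^sup>*" "(v, a) \<in> (crel E (S - C))\<^sup>*" using c2 u v by auto
    thus "(u, v) \<in> (crel E (S - C))\<^sup>*" using crel_rtrancl_sym rtrancl_trans by metis
  qed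
  show ?thesis
    apply (rule exI[of _ "S - C"], rule exI[of _ C])
    using CS' aX bC Xconn Cconn by (auto simp: S'_def)
qed




lemma sg_edge:
  assumes "simple_graph V E" "{u, v} \<in> E"
  shows "u \<noteq> v \<and> u \<in> V \<and> v \<in> V"
proof -
  obtain a b where "a \<noteq> b" "a \<in> V" "b \<in> V" "{u, v} = {a, b}"
    using assms unfolding simple_graph_def by blast
  thus ?thesis by (auto simp: doubleton_eq_iff)
qed

lemma sg_finite_E:
  assumes "simple_graph V E" shows "finite E"
proof -
  have "E \<subseteq> Pow V"
  proof
    fix e assume "e \<in> E"
    then obtain u v where "u \<in> V" "v \<in> V" "e = {u, v}"
      using assms unfolding simple_graph_def by meson
    thus "e \<in> Pow V" by auto
  qed
  moreover have "finite (Pow V)" using assms by (simp add: simple_graph_def)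
  ultimately show ?thesis by (rule finite_subset)
qed

lemma sg_finite_nb:
  assumes "simple_graph V E" shows "finite (neighbours E v)" "neighbours E v \<subseteq> V"
proof -
  show "neighbours E v \<subseteq> V" using sg_edge[OF assms] by (auto simp: neighbours_def)
  thus "finite (neighbours E v)" using assms finite_subset by (auto simp: simple_graph_def)
qed

lemma deg3:
  assumes sg: "simple_graph V E" and w: "weakly_4_connected V E" and v: "v \<in> V"
  shows "3 \<le> card (neighbours E v)"
proof (rule ccontr)
  let ?N = "neighbours E v"
  assume "\<not> 3 \<le> card ?N"
  hence c: "card ?N < 3" by simp
  have NV: "?N \<subseteq> V" using sg_finite_nb[OF sg] by blast
  have fV: "finite V" using sg by (simp add: simple_graph_def)
  have conn: "connected_in E (V - ?N)"
    using w c NV unfolding weakly_4_connected_def k_connected_def by blast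
  have vN: "v \<notin> ?N" using sg_edge[OF sg, of v v] by (auto simp: neighbours_def)
  have "\<exists>w\<in>V - ?N. w \<noteq> v"
  proof (rule ccontr)
    assume "\<not> (\<exists>w\<in>V - ?N. w \<noteq> v)"
    hence "V \<subseteq> insert v ?N" by blast
    hence "card V \<le> card (insert v ?N)" using fV sg_finite_nb[OF sg] by (simp add: card_mono)
    also have "\<dots> \<le> Suc (card ?N)" using card_insert_le_m1 by (simp add: card_insert_if sg_finite_nb[OF sg])
    finally show False using c w unfolding weakly_4_connected_def by linarith
  qed
  then obtain w where wV: "w \<in> V - ?N" and wv: "w \<noteq> v" by blast
  have "(v, w) \<in> (crel E (V - ?N))\<^sup>*" using conn v vN wV by (auto simp: connected_in_crel)
  then obtain u where "(v, u) \<in> crel E (V - ?N)"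
    using wv by (cases rule: converse_rtranclE) auto
  thus False by (auto simp: crel_def neighbours_def)
qed

lemma edges5:
  assumes fE: "finite E" and xy: "x \<noteq> y" "x \<in> A" "y \<in> A"
    and Nx: "neighbours E x \<subseteq> A" and Ny: "neighbours E y \<subseteq> A"
    and cx: "3 \<le> card (neighbours E x)" and cy: "3 \<le> card (neighbours E y)"
  shows "5 \<le> induced_edge_count E A"
proof -
  define I1 where "I1 = (\<lambda>u. {x, u}) ` neighbours E x"
  define I2 where "I2 = (\<lambda>u. {y, u}) ` neighbours E y"
  have inj1: "inj_on (\<lambda>u. {x, u}) (neighbours E x)"
    unfolding inj_on_def doubleton_eq_iff by blast
  have inj2: "inj_on (\<lambda>u. {y, u}) (neighbours E y)"
    unfolding inj_on_def doubleton_eq_iff by blast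
  have fNx: "finite (neighbours E x)"
  proof (rule ccontr)
    assume "infinite (neighbours E x)" thus False using cx by simp
  qed
  have fNy: "finite (neighbours E y)"
  proof (rule ccontr)
    assume "infinite (neighbours E y)" thus False using cy by simp
  qed
  have c1: "card I1 = card (neighbours E x)" unfolding I1_def using card_image[OF inj1] .
  have c2: "card I2 = card (neighbours E y)" unfolding I2_def using card_image[OF inj2] .
  have int: "I1 \<inter> I2 \<subseteq> {{x, y}}"
    using xy(1) by (auto simp: I1_def I2_def doubleton_eq_iff)
  have fI: "finite I1" "finite I2" using fNx fNy by (auto simp: I1_def I2_def)
  have ci: "card (I1 \<inter> I2) \<le> 1"
    using card_mono[OF _ int] by simp
  have sub: "I1 \<union> I2 \<subseteq> {e \<in> E. e \<subseteq> A}"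
    using Nx Ny xy by (auto simp: I1_def I2_def neighbours_def)
  have "card I1 + card I2 = card (I1 \<union> I2) + card (I1 \<inter> I2)"
    using card_Un_Int[OF fI] .
  moreover have "card (I1 \<union> I2) \<le> card {e \<in> E. e \<subseteq> A}"
    using card_mono[OF _ sub] fE by simp
  ultimately show ?thesis unfolding induced_edge_count_def using c1 c2 cx cy ci by linarith
qed

lemma nosep:
  assumes sg: "simple_graph V E" and w: "weakly_4_connected V E"
    and sep: "separation V E A B" and ord: "sep_order A B \<le> 3"
    and x: "x \<in> A - B" and y: "y \<in> A - B" and xy: "x \<noteq> y"
    and x': "x' \<in> B - A" and y': "y' \<in> B - A" and xy': "x' \<noteq> y'"
  shows False
proof -
  have fE: "finite E" using sg_finite_E[OF sg] .
  have nA: "\<And>z. z \<in> A - B \<Longrightarrow> neighbours E z \<subseteq> A"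
  proof
    fix z u assume z: "z \<in> A - B" and u: "u \<in> neighbours E z"
    hence e: "{z, u} \<in> E" by (simp add: neighbours_def)
    hence "u \<in> V" using sg_edge[OF sg] by blast
    show "u \<in> A"
    proof (rule ccontr)
      assume "u \<notin> A"
      hence "u \<in> B - A" using \<open>u \<in> V\<close> sep by (auto simp: separation_def)
      thus False using z e sep by (auto simp: separation_def)
    qed
  qed
  have nB: "\<And>z. z \<in> B - A \<Longrightarrow> neighbours E z \<subseteq> B"
  proof
    fix z u assume z: "z \<in> B - A" and u: "u \<in> neighbours E z"
    hence e: "{u, z} \<in> E" by (simp add: neighbours_def insert_commute)
    hence "u \<in> V" using sg_edge[OF sg] by blast
    show "u \<in> B"
    proof (rule ccontr)
      assume "u \<notin> B"
      hence "u \<in> A - B" using \<open>u \<in> V\<close> sep by (auto simp: separation_def)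
      thus False using z e sep by (auto simp: separation_def)
    qed
  qed
  have VA: "x \<in> V" "y \<in> V" "x' \<in> V" "y' \<in> V" using x y x' y' sep by (auto simp: separation_def)
  have "5 \<le> induced_edge_count E A"
    using edges5[OF fE xy _ _ nA[OF x] nA[OF y] deg3[OF sg w VA(1)] deg3[OF sg w VA(2)]] x y by blast
  moreover have "5 \<le> induced_edge_count E B"
    using edges5[OF fE xy' _ _ nB[OF x'] nB[OF y'] deg3[OF sg w VA(3)] deg3[OF sg w VA(4)]] x' y' by blast
  moreover have "induced_edge_count E A \<le> 4 \<or> induced_edge_count E B \<le> 4"
    using w sep ord unfolding weakly_4_connected_def by blast
  ultimately show False by linarith
qed


definition model :: "'b set \<Rightarrow> 'b set set \<Rightarrow> 'a set \<Rightarrow> 'a set set \<Rightarrow> ('a \<Rightarrow> 'b set) \<Rightarrow> bool" where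
  "model VH EH VG EG \<beta> \<longleftrightarrow>
     (\<forall>v\<in>VG. \<beta> v \<subseteq> VH \<and> connected_in EH (\<beta> v)) \<and>
     (\<forall>u\<in>VG. \<forall>v\<in>VG. u \<noteq> v \<longrightarrow> \<beta> u \<inter> \<beta> v = {}) \<and>
     (\<forall>u v. {u, v} \<in> EG \<longrightarrow> adj EH (\<beta> u) (\<beta> v))"

lemma modelI:
  assumes "\<And>v. v \<in> VG \<Longrightarrow> \<beta> v \<subseteq> VH"
    and "\<And>v. v \<in> VG \<Longrightarrow> connected_in EH (\<beta> v)"
    and "\<And>u v. u \<in> VG \<Longrightarrow> v \<in> VG \<Longrightarrow> u \<noteq> v \<Longrightarrow> \<beta> u \<inter> \<beta> v = {}"
    and "\<And>u v. {u, v} \<in> EG \<Longrightarrow> adj EH (\<beta> u) (\<beta> v)"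
  shows "model VH EH VG EG \<beta>"
  using assms unfolding model_def by blast

lemma has_minor_model: "has_minor VH EH VG EG \<longleftrightarrow> (\<exists>\<beta>. model VH EH VG EG \<beta>)"
  unfolding has_minor_def model_def adj_def by blast

lemma model_edge: "model VH EH VG EG \<beta> \<Longrightarrow> {u, v} \<in> EG \<Longrightarrow> adj EH (\<beta> u) (\<beta> v)"
  unfolding model_def by blast

lemma model_ne: "model VH EH VG EG \<beta> \<Longrightarrow> v \<in> VG \<Longrightarrow> \<beta> v \<noteq> {}"
  unfolding model_def connected_in_def by blast

lemma model_sub: "model VH EH VG EG \<beta> \<Longrightarrow> v \<in> VG \<Longrightarrow> \<beta> v \<subseteq> VH"
  unfolding model_def by blast

lemma model_conn: "model VH EH VG EG \<beta> \<Longrightarrow> v \<in> VG \<Longrightarrow> connected_in EH (\<beta> v)"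
  unfolding model_def by blast

lemma model_disj: "model VH EH VG EG \<beta> \<Longrightarrow> u \<in> VG \<Longrightarrow> v \<in> VG \<Longrightarrow> u \<noteq> v \<Longrightarrow> \<beta> u \<inter> \<beta> v = {}"
  unfolding model_def by blast

lemma model_absorb:
  assumes m: "model VH EH VG EG \<beta>" and s: "s \<in> VG" and v: "v \<in> VH"
    and free: "\<forall>u\<in>VG. v \<notin> \<beta> u" and a: "adj EH {v} (\<beta> s)"
  shows "model VH EH VG EG (\<beta>(s := insert v (\<beta> s)))"
proof (rule modelI)
  have c: "connected_in EH (insert v (\<beta> s))"
    using conn_union[OF connected_single model_conn[OF m s] a] by simp
  fix w assume "w \<in> VG"
  thus "(\<beta>(s := insert v (\<beta> s))) w \<subseteq> VH"
    using v model_sub[OF m] s by auto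
  show "connected_in EH ((\<beta>(s := insert v (\<beta> s))) w)"
    using c model_conn[OF m] \<open>w \<in> VG\<close> by auto
next
  fix u w assume "u \<in> VG" "w \<in> VG" "u \<noteq> w"
  thus "(\<beta>(s := insert v (\<beta> s))) u \<inter> (\<beta>(s := insert v (\<beta> s))) w = {}"
    using model_disj[OF m] free by auto
next
  fix u w assume "{u, w} \<in> EG"
  hence "adj EH (\<beta> u) (\<beta> w)" using model_edge[OF m] by blast
  thus "adj EH ((\<beta>(s := insert v (\<beta> s))) u) ((\<beta>(s := insert v (\<beta> s))) w)"
    by (rule adj_mono) auto
qed

lemma model_merge:
  assumes m: "model VH EH VG EG \<beta>" and sg: "simple_graph VG EG"
    and p: "p \<in> VG" and q: "q \<in> VG" and pq: "p \<noteq> q"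
    and eq: "\<beta> q = X \<union> Y" and d: "X \<inter> Y = {}"
    and cX: "connected_in EH X" and cY: "connected_in EH Y"
    and aX: "adj EH (\<beta> p) X"
    and aY: "\<And>u. {q, u} \<in> EG \<Longrightarrow> u \<noteq> p \<Longrightarrow> adj EH Y (\<beta> u)"
  shows "model VH EH VG EG (\<beta>(p := \<beta> p \<union> X, q := Y))"
proof -
  let ?b = "\<beta>(p := \<beta> p \<union> X, q := Y)"
  have XY: "adj EH X Y"
    using edge_between[OF model_conn[OF m q] eq d] cX cY by (auto simp: connected_in_def)
  have cp: "connected_in EH (\<beta> p \<union> X)" using conn_union[OF model_conn[OF m p] cX aX] .
  have XYsub: "X \<subseteq> \<beta> q" "Y \<subseteq> \<beta> q" using eq by auto
  have qV: "\<beta> q \<subseteq> VH" "\<beta> p \<subseteq> VH" using model_sub[OF m] p q by auto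
  have D: "\<And>a c. a \<in> VG \<Longrightarrow> c \<in> VG \<Longrightarrow> a \<noteq> c \<Longrightarrow> \<beta> a \<inter> \<beta> c = {}"
    using model_disj[OF m] by blast
  show ?thesis
  proof (rule modelI)
    fix w assume w: "w \<in> VG"
    show "?b w \<subseteq> VH" using w model_sub[OF m] XYsub qV by auto
    show "connected_in EH (?b w)" using cp cY w model_conn[OF m] by auto
  next
    fix u w assume u: "u \<in> VG" and w: "w \<in> VG" and uw: "u \<noteq> w"
    have Dpq: "\<beta> p \<inter> \<beta> q = {}" using D p q pq by blast
    have Dq: "\<And>c. c \<in> VG \<Longrightarrow> c \<noteq> q \<Longrightarrow> \<beta> c \<inter> X = {} \<and> \<beta> c \<inter> Y = {}"
      using D q XYsub by blast
    show "?b u \<inter> ?b w = {}"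
    proof (cases "u = q")
      case True
      show ?thesis
      proof (cases "w = p")
        case True thus ?thesis using \<open>u = q\<close> pq Dpq XYsub d by auto
      next
        case False thus ?thesis using \<open>u = q\<close> uw Dq[OF w] by auto
      qed
    next
      case uq: False
      show ?thesis
      proof (cases "w = q")
        case True
        show ?thesis
        proof (cases "u = p")
          case True thus ?thesis using \<open>w = q\<close> pq Dpq XYsub d by auto
        next
          case False thus ?thesis using \<open>w = q\<close> uw Dq[OF u] by auto
        qed
      next
        case wq: False
        show ?thesis
        proof (cases "u = p")
          case True thus ?thesis using wq uw D[OF u w uw] Dq[OF w wq] by auto
        next
          case up: False
          show ?thesis
          proof (cases "w = p")
            case True thus ?thesis using uq up D[OF u w uw] Dq[OF u uq] by auto
          next
            case False thus ?thesis using uq up wq D[OF u w uw] by auto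
          qed
        qed
      qed
    qed
  next
    fix u w assume e: "{u, w} \<in> EG"
    have uw: "u \<noteq> w" using sg_edge[OF sg e] by blast
    have orig: "adj EH (\<beta> u) (\<beta> w)" using model_edge[OF m e] .
    show "adj EH (?b u) (?b w)"
    proof (cases "u = q")
      case True
      show ?thesis
      proof (cases "w = p")
        case True
        have "adj EH Y (\<beta> p \<union> X)" using XY adj_sym adj_mono by (metis Un_upper2 order_refl)
        thus ?thesis using \<open>u = q\<close> True pq by simp
      next
        case False
        have "adj EH Y (\<beta> w)" using aY[of w] e \<open>u = q\<close> False by simp
        thus ?thesis using \<open>u = q\<close> False uw by simp
      qed
    next
      case uq: False
      show ?thesis
      proof (cases "w = q")
        case True
        show ?thesis
        proof (cases "u = p")
          case True
          have "adj EH (\<beta> p \<union> X) Y" using XY adj_mono by (metis Un_upper2 order_refl)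
          thus ?thesis using \<open>w = q\<close> True pq by simp
        next
          case False
          have "{q, u} \<in> EG" using e \<open>w = q\<close> by (simp add: insert_commute)
          hence "adj EH Y (\<beta> u)" using aY[of u] False by simp
          thus ?thesis using \<open>w = q\<close> False uw adj_sym[of EH Y "\<beta> u"] by simp
        qed
      next
        case wq: False
        have "adj EH (\<beta> u) (\<beta> w) \<Longrightarrow> adj EH (?b u) (?b w)"
          by (rule adj_mono) (use uq wq in auto)
        thus ?thesis using orig by blast
      qed
    qed
  qed
qed

lemma model_split:
  assumes m: "model VH EH VG EG \<beta>" and sg: "simple_graph VG EG" and q: "q \<in> VG"
    and eq: "\<beta> q = X \<union> Y" and d: "X \<inter> Y = {}"
    and cX: "connected_in EH X" and cY: "connected_in EH Y"
    and N: "N1 \<union> N2 = neighbours EG q"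
    and a1: "\<And>n. n \<in> N1 \<Longrightarrow> adj EH X (\<beta> n)"
    and a2: "\<And>n. n \<in> N2 \<Longrightarrow> adj EH Y (\<beta> n)"
  shows "model VH EH (split_V VG q) (split_E EG q N1 N2)
           (\<lambda>(v, b). if v = q then (if b then Y else X) else \<beta> v)"
proof -
  define g where "g = (\<lambda>(v, b). if v = q then (if b then Y else X) else \<beta> v)"
  have XY: "adj EH X Y"
    using edge_between[OF model_conn[OF m q] eq d] cX cY by (auto simp: connected_in_def)
  have XYsub: "X \<subseteq> \<beta> q" "Y \<subseteq> \<beta> q" using eq by auto
  have qV: "\<beta> q \<subseteq> VH" using model_sub[OF m q] .
  have Nq: "\<And>n. n \<in> N1 \<union> N2 \<Longrightarrow> n \<noteq> q \<and> n \<in> VG"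
    using N sg_edge[OF sg] by (auto simp: neighbours_def)
  have sym2: "\<And>s t u v. adj EH (g s) (g t) \<Longrightarrow> {u, v} = {s, t} \<Longrightarrow> adj EH (g u) (g v)"
    using adj_sym by (auto simp: doubleton_eq_iff)
  have D: "\<And>a c. a \<in> VG \<Longrightarrow> c \<in> VG \<Longrightarrow> a \<noteq> c \<Longrightarrow> \<beta> a \<inter> \<beta> c = {}"
    using model_disj[OF m] by blast
  have Dq: "\<And>c. c \<in> VG \<Longrightarrow> c \<noteq> q \<Longrightarrow> \<beta> c \<inter> X = {} \<and> \<beta> c \<inter> Y = {}"
    using D[OF _ q] XYsub by blast
  have "model VH EH (split_V VG q) (split_E EG q N1 N2) g"
  proof (rule modelI)
    fix w assume w: "w \<in> split_V VG q"
    then obtain a b where wab: "w = (a, b)" by (cases w)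
    show "g w \<subseteq> VH"
    proof (cases "a = q")
      case True thus ?thesis using wab XYsub qV by (cases b) (auto simp: g_def)
    next
      case False hence "a \<in> VG" using w wab by (auto simp: split_V_def)
      thus ?thesis using False wab model_sub[OF m] by (simp add: g_def)
    qed
    show "connected_in EH (g w)" using w wab cX cY model_conn[OF m] by (auto simp: split_V_def g_def)
  next
    fix u w assume u: "u \<in> split_V VG q" and w: "w \<in> split_V VG q" and uw: "u \<noteq> w"
    obtain a b where uab: "u = (a, b)" by (cases u)
    obtain c e where wce: "w = (c, e)" by (cases w)
    show "g u \<inter> g w = {}"
    proof (cases "a = q")
      case True
      show ?thesis
      proof (cases "c = q")
        case True
        hence "b \<noteq> e" using uab wce uw \<open>a = q\<close> by auto
        thus ?thesis using True \<open>a = q\<close> uab wce d by (cases b) (auto simp: g_def)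
      next
        case False
        have "c \<in> VG" using w wce False by (auto simp: split_V_def)
        thus ?thesis using Dq[of c] False True uab wce by (auto simp: g_def)
      qed
    next
      case aq: False
      have aV: "a \<in> VG" using u uab aq by (auto simp: split_V_def)
      show ?thesis
      proof (cases "c = q")
        case True
        thus ?thesis using Dq[OF aV aq] aq uab wce by (auto simp: g_def)
      next
        case False
        have "c \<in> VG" using w wce False by (auto simp: split_V_def)
        moreover have "b = False" "e = False" using u w uab wce aq False by (auto simp: split_V_def)
        ultimately show ?thesis using D[OF aV] aq False uab wce uw by (auto simp: g_def)
      qed
    qed
  next
    fix u w assume e: "{u, w} \<in> split_E EG q N1 N2"
    then consider
      (old) a b where "{u, w} = {(a, False), (b, False)}" "{a, b} \<in> EG" "a \<noteq> q" "b \<noteq> q"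
      | (qq) "{u, w} = {(q, False), (q, True)}"
      | (n1) n where "{u, w} = {(q, False), (n, False)}" "n \<in> N1"
      | (n2) n where "{u, w} = {(q, True), (n, False)}" "n \<in> N2"
      unfolding split_E_def by blast
    thus "adj EH (g u) (g w)"
    proof cases
      case old
      have "adj EH (g (a, False)) (g (b, False))" using model_edge[OF m old(2)] old(3,4) by (simp add: g_def)
      thus ?thesis using sym2 old(1) by blast
    next
      case qq
      have "adj EH (g (q, False)) (g (q, True))" using XY by (simp add: g_def)
      thus ?thesis using sym2 qq by blast
    next
      case n1
      have "adj EH (g (q, False)) (g (n, False))" using a1[OF n1(2)] Nq[of n] n1(2) by (simp add: g_def)
      thus ?thesis using sym2 n1(1) by blast
    next
      case n2
      have "adj EH (g (q, True)) (g (n, False))" using a2[OF n2(2)] Nq[of n] n2(2) by (simp add: g_def)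
      thus ?thesis using sym2 n2(1) by blast
    qed
  qed
  thus ?thesis unfolding g_def .
qed

theorem lemma4p6:
  fixes V1 :: "'a set" and E1 :: "'a set set" and VH :: "'b set" and EH :: "'b set set"
    and p1 p2 q1 q2 q3 :: 'a and R :: "'a set"
  assumes G1: "simple_graph V1 E1"
    and H: "simple_graph VH EH"
    and w4c: "weakly_4_connected VH EH"
    and minor: "has_minor VH EH V1 E1"
    and P_def: "P = {p1, p2}" and Q_def: "Q = {q1, q2, q3}"
    and distP: "p1 \<noteq> p2" and distQ: "q1 \<noteq> q2" "q1 \<noteq> q3" "q2 \<noteq> q3"
    and part: "P \<union> Q \<union> R = V1" "P \<inter> Q = {}" "P \<inter> R = {}" "Q \<inter> R = {}"
    and PQ_edges: "\<forall>p\<in>P. \<forall>q\<in>Q. {p, q} \<in> E1"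
    and Q_indep: "\<forall>q\<in>Q. \<forall>q'\<in>Q. {q, q'} \<notin> E1"
    and R_card: "card R \<ge> 2"
    and sep: "separation V1 E1 (P \<union> Q) (Q \<union> R)"
    and sep_nontriv: "nontrivial_sep V1 (P \<union> Q) (Q \<union> R)"
    and sep_ord: "sep_order (P \<union> Q) (Q \<union> R) = 3"
  shows "(\<exists>p\<in>P. \<exists>r\<in>R. has_minor VH EH V1 (insert {p, r} E1))
       \<or> (\<exists>q\<in>Q. \<exists>N1 N2. valid_split E1 q N1 N2 \<and> p1 \<in> N1 \<and> p2 \<in> N2 \<and>
             has_minor VH EH (split_V V1 q) (split_E E1 q N1 N2))"
proof -
  have Pd: "P = {p1, p2}" and Qd: "Q = {q1, q2, q3}" using P_def Q_def by auto
  have V1eq: "V1 = P \<union> Q \<union> R" using part(1) by simp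
  have PV: "P \<subseteq> V1" and QV: "Q \<subseteq> V1" and RV: "R \<subseteq> V1" using V1eq by auto
  have p1P: "p1 \<in> P" and p2P: "p2 \<in> P" using Pd by auto
  have finV1: "finite V1" using G1 by (simp add: simple_graph_def)
  have finVH: "finite VH" using H by (simp add: simple_graph_def)
  define BP :: "('a \<Rightarrow> 'b set) \<Rightarrow> 'b set" where "BP = (\<lambda>\<beta>. \<Union>p\<in>P. \<beta> p)"
  define BQ :: "('a \<Rightarrow> 'b set) \<Rightarrow> 'b set" where "BQ = (\<lambda>\<beta>. \<Union>q\<in>Q. \<beta> q)"
  define N where "N = card VH"
  define meas where "meas = (\<lambda>\<beta>. (N + 1) * card (BQ \<beta>) + (N - card (BP \<beta>)))"
  obtain \<beta>0 where b0: "model VH EH V1 E1 \<beta>0" using has_minor_model[THEN iffD1, OF minor] by (elim exE)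
  have "\<exists>\<beta>. model VH EH V1 E1 \<beta> \<and> (\<forall>\<beta>'. model VH EH V1 E1 \<beta>' \<longrightarrow> meas \<beta> \<le> meas \<beta>')"
    by (rule ex_has_least_nat) (rule b0)
  then obtain \<beta> where m: "model VH EH V1 E1 \<beta>"
    and minb': "\<forall>\<beta>'. model VH EH V1 E1 \<beta>' \<longrightarrow> meas \<beta> \<le> meas \<beta>'"
    by (elim exE conjE)
  have minb: "\<And>\<beta>'. model VH EH V1 E1 \<beta>' \<Longrightarrow> meas \<beta> \<le> meas \<beta>'" using minb' by simp
  have BPsub: "\<And>\<beta>'. model VH EH V1 E1 \<beta>' \<Longrightarrow> BP \<beta>' \<subseteq> VH"
  proof -
    fix \<beta>' assume mm: "model VH EH V1 E1 \<beta>'"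
    show "BP \<beta>' \<subseteq> VH" unfolding BP_def using PV model_sub[OF mm] by blast
  qed
  have BQsub: "\<And>\<beta>'. model VH EH V1 E1 \<beta>' \<Longrightarrow> BQ \<beta>' \<subseteq> VH"
  proof -
    fix \<beta>' assume mm: "model VH EH V1 E1 \<beta>'"
    show "BQ \<beta>' \<subseteq> VH" unfolding BQ_def using QV model_sub[OF mm] by blast
  qed
  have D: "\<And>u w. u \<in> V1 \<Longrightarrow> w \<in> V1 \<Longrightarrow> u \<noteq> w \<Longrightarrow> \<beta> u \<inter> \<beta> w = {}"
    using model_disj[OF m] by blast
  have PnQ: "\<And>p q. p \<in> P \<Longrightarrow> q \<in> Q \<Longrightarrow> p \<noteq> q" using part(2) by blast
  have PnR: "\<And>p r. p \<in> P \<Longrightarrow> r \<in> R \<Longrightarrow> p \<noteq> r" using part(3) by blast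
  have QnR: "\<And>q r. q \<in> Q \<Longrightarrow> r \<in> R \<Longrightarrow> q \<noteq> r" using part(4) by blast
  have arith: "\<And>a a' b b' :: nat. a' < a \<Longrightarrow> (N + 1) * a' + (N - b') < (N + 1) * a + (N - b)"
  proof -
    fix a a' b b' :: nat assume "a' < a"
    hence "(N + 1) * (a' + 1) \<le> (N + 1) * a" by (intro mult_le_mono2) simp
    thus "(N + 1) * a' + (N - b') < (N + 1) * a + (N - b)" by simp
  qed
  have decM: "\<And>p q X Y. p \<in> P \<Longrightarrow> q \<in> Q \<Longrightarrow> \<beta> q = X \<union> Y \<Longrightarrow> X \<inter> Y = {} \<Longrightarrow> X \<noteq> {}
      \<Longrightarrow> model VH EH V1 E1 (\<beta>(p := \<beta> p \<union> X, q := Y)) \<Longrightarrow> False"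
  proof -
    fix p q X Y assume p: "p \<in> P" and q: "q \<in> Q" and eq: "\<beta> q = X \<union> Y" and d: "X \<inter> Y = {}"
      and X: "X \<noteq> {}" and m': "model VH EH V1 E1 (\<beta>(p := \<beta> p \<union> X, q := Y))"
    let ?b = "\<beta>(p := \<beta> p \<union> X, q := Y)"
    have s1: "BQ ?b \<subseteq> BQ \<beta>"
    proof
      fix x assume "x \<in> BQ ?b"
      then obtain q' where q': "q' \<in> Q" "x \<in> ?b q'" unfolding BQ_def by blast
      have "q' \<noteq> p" using PnQ[OF p q'(1)] by simp
      thus "x \<in> BQ \<beta>" using q' eq q unfolding BQ_def by (cases "q' = q") auto
    qed
    have s2: "X \<subseteq> BQ \<beta>" using eq q unfolding BQ_def by blast
    have s3: "X \<inter> BQ ?b = {}"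
    proof (rule ccontr)
      assume "X \<inter> BQ ?b \<noteq> {}"
      then obtain x q' where x: "x \<in> X" and q': "q' \<in> Q" "x \<in> ?b q'" unfolding BQ_def by blast
      have "q' \<noteq> p" using PnQ[OF p q'(1)] by simp
      show False
      proof (cases "q' = q")
        case True thus False using q' x d by auto
      next
        case False
        hence "x \<in> \<beta> q'" using q' \<open>q' \<noteq> p\<close> by simp
        moreover have "x \<in> \<beta> q" using x eq by simp
        ultimately show False using D[of q' q] QV q'(1) q False by blast
      qed
    qed
    have "BQ ?b \<subset> BQ \<beta>" using s1 s2 s3 X by blast
    hence "card (BQ ?b) < card (BQ \<beta>)"
      using psubset_card_mono finite_subset[OF BQsub[OF m] finVH] by blast
    hence "meas ?b < meas \<beta>" unfolding meas_def using arith by blast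
    thus False using minb[OF m'] by simp
  qed
  have decA: "\<And>p v. p \<in> P \<Longrightarrow> v \<in> VH \<Longrightarrow> (\<forall>u\<in>V1. v \<notin> \<beta> u) \<Longrightarrow> adj EH {v} (\<beta> p) \<Longrightarrow> False"
  proof -
    fix p v assume p: "p \<in> P" and v: "v \<in> VH" and free: "\<forall>u\<in>V1. v \<notin> \<beta> u"
      and a: "adj EH {v} (\<beta> p)"
    let ?b = "\<beta>(p := insert v (\<beta> p))"
    have m': "model VH EH V1 E1 ?b" using model_absorb[OF m _ v free a] p PV by blast
    have "BQ ?b = BQ \<beta>" unfolding BQ_def using PnQ[OF p] by auto
    moreover have "BP \<beta> \<subset> BP ?b"
    proof -
      have "BP \<beta> \<subseteq> BP ?b" unfolding BP_def by auto
      moreover have "v \<in> BP ?b" unfolding BP_def using p by auto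
      moreover have "v \<notin> BP \<beta>" unfolding BP_def using free PV by blast
      ultimately show ?thesis by blast
    qed
    hence "card (BP \<beta>) < card (BP ?b)"
      using psubset_card_mono finite_subset[OF BPsub[OF m'] finVH] by blast
    moreover have "card (BP ?b) \<le> N" unfolding N_def using card_mono[OF finVH BPsub[OF m']] .
    ultimately have "meas ?b < meas \<beta>" unfolding meas_def by simp
    thus False using minb[OF m'] by simp
  qed
  show ?thesis
  proof (cases "\<exists>p\<in>P. \<exists>r\<in>R. adj EH (\<beta> p) (\<beta> r)")
    case True
    then obtain p r where p: "p \<in> P" and r: "r \<in> R" and a: "adj EH (\<beta> p) (\<beta> r)" by blast
    have "model VH EH V1 (insert {p, r} E1) \<beta>"
    proof (rule modelI)
      fix v assume "v \<in> V1"
      thus "\<beta> v \<subseteq> VH" "connected_in EH (\<beta> v)" using model_sub[OF m] model_conn[OF m] by auto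
    next
      fix u v assume "u \<in> V1" "v \<in> V1" "u \<noteq> v"
      thus "\<beta> u \<inter> \<beta> v = {}" using D by blast
    next
      fix u v assume e: "{u, v} \<in> insert {p, r} E1"
      show "adj EH (\<beta> u) (\<beta> v)"
      proof (cases "{u, v} = {p, r}")
        case True
        hence "(u = p \<and> v = r) \<or> (u = r \<and> v = p)" by (simp add: doubleton_eq_iff)
        thus ?thesis using a adj_sym by metis
      next
        case False
        hence "{u, v} \<in> E1" using e by simp
        thus ?thesis using model_edge[OF m] by blast
      qed
    qed
    hence "has_minor VH EH V1 (insert {p, r} E1)" using has_minor_model by blast
    thus ?thesis using p r by blast
  next
    case noPR: False
    show ?thesis
    proof (cases "\<exists>q\<in>Q. \<exists>a1\<in>\<beta> q. \<exists>a2\<in>\<beta> q. a1 \<noteq> a2 \<and> adj EH {a1} (\<beta> p1) \<and> adj EH {a2} (\<beta> p2)")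
      case True
      then obtain q a1 a2 where q: "q \<in> Q" and a1: "a1 \<in> \<beta> q" and a2: "a2 \<in> \<beta> q" and a12: "a1 \<noteq> a2"
        and ad1: "adj EH {a1} (\<beta> p1)" and ad2: "adj EH {a2} (\<beta> p2)" by blast
      have qV: "q \<in> V1" using q QV by blast
      obtain X Y where eq: "\<beta> q = X \<union> Y" and d: "X \<inter> Y = {}" and aX: "a1 \<in> X" and aY: "a2 \<in> Y"
        and cX: "connected_in EH X" and cY: "connected_in EH Y"
        using split_conn[OF model_conn[OF m qV] a1 a2 a12] by blast
      have XP: "adj EH X (\<beta> p1)" using adj_mono[OF ad1] aX by blast
      have YP: "adj EH Y (\<beta> p2)" using adj_mono[OF ad2] aY by blast
      define NR where "NR = neighbours E1 q - P"
      have Pnb: "P \<subseteq> neighbours E1 q"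
        using PQ_edges q by (auto simp: neighbours_def insert_commute)
      have nbeq: "neighbours E1 q = P \<union> NR" using Pnb unfolding NR_def by blast
      have NRR: "NR \<subseteq> R"
      proof
        fix n assume n: "n \<in> NR"
        hence e: "{q, n} \<in> E1" and nP: "n \<notin> P" by (auto simp: NR_def neighbours_def)
        have "n \<in> V1" using sg_edge[OF G1 e] by blast
        moreover have "n \<notin> Q" using Q_indep q e by blast
        ultimately show "n \<in> R" using V1eq nP by blast
      qed
      have finNR: "finite NR" using finite_subset[OF NRR finite_subset[OF RV finV1]] .
      have adjq: "\<And>n. n \<in> NR \<Longrightarrow> adj EH X (\<beta> n) \<or> adj EH Y (\<beta> n)"
      proof -
        fix n assume "n \<in> NR"
        hence "{q, n} \<in> E1" by (auto simp: NR_def neighbours_def)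
        hence "adj EH (\<beta> q) (\<beta> n)" using model_edge[OF m] by blast
        thus "adj EH X (\<beta> n) \<or> adj EH Y (\<beta> n)" using eq unfolding adj_def by blast
      qed
      have Xne: "X \<noteq> {}" and Yne: "Y \<noteq> {}" using aX aY by auto
      have p1q: "p1 \<noteq> q" and p2q: "p2 \<noteq> q" using PnQ[OF p1P q] PnQ[OF p2P q] by auto
      have p1V: "p1 \<in> V1" and p2V: "p2 \<in> V1" using p1P p2P PV by auto
      show ?thesis
      proof (cases "\<forall>n\<in>NR. adj EH Y (\<beta> n)")
        case True
        have "model VH EH V1 E1 (\<beta>(p1 := \<beta> p1 \<union> X, q := Y))"
        proof (rule model_merge[OF m G1 p1V qV p1q eq d cX cY])
          show "adj EH (\<beta> p1) X" using XP adj_sym by blast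
        next
          fix u assume "{q, u} \<in> E1" "u \<noteq> p1"
          hence "u \<in> neighbours E1 q" by (simp add: neighbours_def)
          hence "u = p2 \<or> u \<in> NR" using nbeq Pd \<open>u \<noteq> p1\<close> by blast
          thus "adj EH Y (\<beta> u)" using True YP by blast
        qed
        thus ?thesis using decM[OF p1P q eq d Xne] by blast
      next
        case notY: False
        show ?thesis
        proof (cases "\<forall>n\<in>NR. adj EH X (\<beta> n)")
          case True
          have eq': "\<beta> q = Y \<union> X" using eq by blast
          have d': "Y \<inter> X = {}" using d by blast
          have "model VH EH V1 E1 (\<beta>(p2 := \<beta> p2 \<union> Y, q := X))"
          proof (rule model_merge[OF m G1 p2V qV p2q eq' d' cY cX])
            show "adj EH (\<beta> p2) Y" using YP adj_sym by blast
          next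
            fix u assume "{q, u} \<in> E1" "u \<noteq> p2"
            hence "u \<in> neighbours E1 q" by (simp add: neighbours_def)
            hence "u = p1 \<or> u \<in> NR" using nbeq Pd \<open>u \<noteq> p2\<close> by blast
            thus "adj EH X (\<beta> u)" using True XP by blast
          qed
          thus ?thesis using decM[OF p2P q eq' d' Yne] by blast
        next
          case notX: False
          obtain n1 where n1: "n1 \<in> NR" "\<not> adj EH Y (\<beta> n1)" using notY by blast
          obtain n2 where n2: "n2 \<in> NR" "\<not> adj EH X (\<beta> n2)" using notX by blast
          define S1 where "S1 = {n \<in> NR. adj EH X (\<beta> n)}"
          define S2 where "S2 = NR - S1"
          define N1 where "N1 = insert p1 S1"
          define N2 where "N2 = insert p2 S2"
          have n1S: "n1 \<in> S1" using n1 adjq unfolding S1_def by blast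
          have n2S: "n2 \<in> S2" using n2 unfolding S2_def S1_def by blast
          have NRnP: "\<And>n. n \<in> NR \<Longrightarrow> n \<notin> P" unfolding NR_def by blast
          have vs: "valid_split E1 q N1 N2"
            unfolding valid_split_def
          proof (intro conjI)
            show "N1 \<union> N2 = neighbours E1 q" using nbeq Pd unfolding N1_def N2_def S2_def S1_def by blast
            show "N1 \<inter> N2 = {}" using distP NRnP p1P p2P unfolding N1_def N2_def S2_def S1_def by blast
            have "n1 \<noteq> p1" using NRnP[of n1] n1(1) p1P by blast
            hence "card {p1, n1} = 2" by simp
            moreover have "{p1, n1} \<subseteq> N1" using n1S unfolding N1_def by blast
            moreover have "finite N1" using finNR unfolding N1_def S1_def by simp
            ultimately show "2 \<le> card N1" using card_mono by metis
            have "n2 \<noteq> p2" using NRnP[of n2] n2(1) p2P by blast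
            hence "card {p2, n2} = 2" by simp
            moreover have "{p2, n2} \<subseteq> N2" using n2S unfolding N2_def by blast
            moreover have "finite N2" using finNR unfolding N2_def S2_def by simp
            ultimately show "2 \<le> card N2" using card_mono by metis
          qed
          have "model VH EH (split_V V1 q) (split_E E1 q N1 N2)
                  (\<lambda>(v, b). if v = q then (if b then Y else X) else \<beta> v)"
          proof (rule model_split[OF m G1 qV eq d cX cY])
            show "N1 \<union> N2 = neighbours E1 q" using vs unfolding valid_split_def by blast
          next
            fix n assume "n \<in> N1"
            thus "adj EH X (\<beta> n)" using XP unfolding N1_def S1_def by blast
          next
            fix n assume "n \<in> N2"
            thus "adj EH Y (\<beta> n)" using YP adjq unfolding N2_def S2_def S1_def by blast
          qed
          hence "has_minor VH EH (split_V V1 q) (split_E E1 q N1 N2)" using has_minor_model by blast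
          moreover have "p1 \<in> N1" "p2 \<in> N2" unfolding N1_def N2_def by auto
          ultimately show ?thesis using vs q by blast
        qed
      qed
    next
      case noSplit: False
      define Z where "Z = {a \<in> BQ \<beta>. adj EH {a} (BP \<beta>)}"
      define Zq where "Zq = (\<lambda>q. {a \<in> \<beta> q. adj EH {a} (\<beta> p1) \<or> adj EH {a} (\<beta> p2)})"
      have Zsub: "Z \<subseteq> Zq q1 \<union> Zq q2 \<union> Zq q3"
      proof
        fix a assume "a \<in> Z"
        then obtain q where q: "q \<in> Q" "a \<in> \<beta> q" and aa: "adj EH {a} (BP \<beta>)"
          unfolding Z_def BQ_def by blast
        have "adj EH {a} (\<beta> p1) \<or> adj EH {a} (\<beta> p2)"
          using aa Pd unfolding BP_def adj_def by blast
        thus "a \<in> Zq q1 \<union> Zq q2 \<union> Zq q3" using q Qd unfolding Zq_def by blast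
      qed
      have Zq1: "\<And>q. q \<in> Q \<Longrightarrow> card (Zq q) \<le> 1"
      proof -
        fix q assume q: "q \<in> Q"
        have qV: "q \<in> V1" using q QV by blast
        have "Zq q \<subseteq> VH" using model_sub[OF m qV] unfolding Zq_def by blast
        hence fin: "finite (Zq q)" using finite_subset finVH by blast
        have A1: "\<exists>a\<in>\<beta> q. adj EH {a} (\<beta> p1)"
        proof -
          have "{p1, q} \<in> E1" using PQ_edges p1P q by blast
          hence "adj EH (\<beta> p1) (\<beta> q)" using model_edge[OF m] by blast
          thus ?thesis unfolding adj_def by (metis insert_commute singletonI)
        qed
        have A2: "\<exists>a\<in>\<beta> q. adj EH {a} (\<beta> p2)"
        proof -
          have "{p2, q} \<in> E1" using PQ_edges p2P q by blast
          hence "adj EH (\<beta> p2) (\<beta> q)" using model_edge[OF m] by blast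
          thus ?thesis unfolding adj_def by (metis insert_commute singletonI)
        qed
        have "\<forall>a\<in>Zq q. \<forall>b\<in>Zq q. a = b"
        proof (intro ballI, rule ccontr)
          fix a b assume a: "a \<in> Zq q" and b: "b \<in> Zq q" and ab: "a \<noteq> b"
          obtain c where c: "c \<in> \<beta> q" "adj EH {c} (\<beta> p1)" using A1 by blast
          obtain e where e: "e \<in> \<beta> q" "adj EH {e} (\<beta> p2)" using A2 by blast
          have "\<exists>a1\<in>\<beta> q. \<exists>a2\<in>\<beta> q. a1 \<noteq> a2 \<and> adj EH {a1} (\<beta> p1) \<and> adj EH {a2} (\<beta> p2)"
          proof (cases "c = e")
            case False thus ?thesis using c e by blast
          next
            case True
            obtain x where x: "x = a \<or> x = b" "x \<noteq> c" using ab by blast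
            hence xq: "x \<in> \<beta> q" and xa: "adj EH {x} (\<beta> p1) \<or> adj EH {x} (\<beta> p2)"
              using a b unfolding Zq_def by auto
            show ?thesis
            proof (cases "adj EH {x} (\<beta> p1)")
              case True
              have "x \<noteq> e" using x(2) \<open>c = e\<close> by simp
              thus ?thesis using xq e True by blast
            next
              case False
              hence x2: "adj EH {x} (\<beta> p2)" using xa by blast
              have "c \<noteq> x" using x(2) by simp
              thus ?thesis using xq c x2 by blast
            qed
          qed
          thus False using noSplit q by blast
        qed
        thus "card (Zq q) \<le> 1" using fin by (metis One_nat_def card_le_Suc0_iff_eq)
      qed
      have finZq: "\<And>q. q \<in> Q \<Longrightarrow> finite (Zq q)"
      proof -
        fix q assume "q \<in> Q"
        hence "q \<in> V1" using QV by blast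
        hence "Zq q \<subseteq> VH" using model_sub[OF m] unfolding Zq_def by blast
        thus "finite (Zq q)" using finite_subset finVH by blast
      qed
      have q123: "q1 \<in> Q" "q2 \<in> Q" "q3 \<in> Q" using Qd by auto
      have "card (Zq q1 \<union> Zq q2 \<union> Zq q3) \<le> card (Zq q1) + card (Zq q2) + card (Zq q3)"
        by (meson card_Un_le add_le_mono order_trans order_refl)
      hence cZ3: "card (Zq q1 \<union> Zq q2 \<union> Zq q3) \<le> 3" using Zq1[OF q123(1)] Zq1[OF q123(2)] Zq1[OF q123(3)] by linarith
      have cZ: "card Z \<le> 3"
        using card_mono[OF _ Zsub] finZq q123 cZ3 by (meson finite_UnI le_trans)
      have ZBQ: "Z \<subseteq> BQ \<beta>" unfolding Z_def by blast
      have key: "\<And>u v. u \<in> BP \<beta> \<Longrightarrow> v \<in> VH \<Longrightarrow> {u, v} \<in> EH \<Longrightarrow> v \<in> BP \<beta> \<or> v \<in> Z"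
      proof -
        fix u v assume u: "u \<in> BP \<beta>" and v: "v \<in> VH" and e: "{u, v} \<in> EH"
        obtain p where p: "p \<in> P" "u \<in> \<beta> p" using u unfolding BP_def by blast
        have avp: "adj EH {v} (\<beta> p)" using p e unfolding adj_def by (metis insert_commute singletonI)
        show "v \<in> BP \<beta> \<or> v \<in> Z"
        proof (cases "\<exists>w\<in>V1. v \<in> \<beta> w")
          case False thus ?thesis using decA[OF p(1) v _ avp] by blast
        next
          case True
          then obtain w where w: "w \<in> V1" "v \<in> \<beta> w" by blast
          show ?thesis
          proof (cases "w \<in> P")
            case True thus ?thesis using w unfolding BP_def by blast
          next
            case wnP: False
            show ?thesis
            proof (cases "w \<in> Q")
              case True
              have "adj EH {v} (BP \<beta>)" using adj_mono[OF avp] p unfolding BP_def by blast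
              thus ?thesis using True w unfolding Z_def BQ_def by blast
            next
              case False
              hence "w \<in> R" using w wnP V1eq by blast
              moreover have "adj EH (\<beta> p) (\<beta> w)" using p w e unfolding adj_def by blast
              ultimately show ?thesis using noPR p by blast
            qed
          qed
        qed
      qed
      define A where "A = BP \<beta> \<union> Z"
      define B where "B = VH - BP \<beta>"
      have sepAB: "separation VH EH A B"
        unfolding separation_def
      proof (intro conjI ballI)
        show "A \<subseteq> VH" using BPsub[OF m] BQsub[OF m] ZBQ unfolding A_def by blast
        show "B \<subseteq> VH" unfolding B_def by blast
        show "A \<union> B = VH" using BPsub[OF m] BQsub[OF m] ZBQ unfolding A_def B_def by blast
      next
        fix u v assume u: "u \<in> A - B" and v: "v \<in> B - A"
        have "u \<in> BP \<beta>" using u BPsub[OF m] BQsub[OF m] ZBQ unfolding A_def B_def by blast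
        moreover have "v \<in> VH" "v \<notin> BP \<beta>" "v \<notin> Z" using v unfolding A_def B_def by auto
        ultimately show "{u, v} \<notin> EH" using key by blast
      qed
      have ord: "sep_order A B \<le> 3"
      proof -
        have "A \<inter> B \<subseteq> Z" unfolding A_def B_def by blast
        moreover have "finite Z" using finite_subset[OF ZBQ finite_subset[OF BQsub[OF m] finVH]] .
        ultimately show ?thesis unfolding sep_order_def using cZ card_mono le_trans by blast
      qed
      have p1V: "p1 \<in> V1" and p2V: "p2 \<in> V1" using p1P p2P PV by auto
      obtain x where x: "x \<in> \<beta> p1" using model_ne[OF m p1V] by blast
      obtain y where y: "y \<in> \<beta> p2" using model_ne[OF m p2V] by blast
      have xy: "x \<noteq> y" using D[OF p1V p2V distP] x y by blast
      have xA: "x \<in> A - B" "y \<in> A - B" using x y p1P p2P unfolding A_def B_def BP_def by auto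
      have "\<exists>r1 r2. r1 \<in> R \<and> r2 \<in> R \<and> r1 \<noteq> r2"
      proof (rule ccontr)
        assume "\<not> (\<exists>r1 r2. r1 \<in> R \<and> r2 \<in> R \<and> r1 \<noteq> r2)"
        hence "\<forall>a\<in>R. \<forall>b\<in>R. a = b" by blast
        moreover have "finite R" using finite_subset[OF RV finV1] .
        ultimately have "card R \<le> 1" by (metis One_nat_def card_le_Suc0_iff_eq)
        thus False using R_card by simp
      qed
      then obtain r1 r2 where r: "r1 \<in> R" "r2 \<in> R" "r1 \<noteq> r2" by blast
      have r1V: "r1 \<in> V1" and r2V: "r2 \<in> V1" using r RV by auto
      obtain x' where x': "x' \<in> \<beta> r1" using model_ne[OF m r1V] by blast
      obtain y' where y': "y' \<in> \<beta> r2" using model_ne[OF m r2V] by blast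
      have xy': "x' \<noteq> y'" using D[OF r1V r2V r(3)] x' y' by blast
      have notBP: "\<And>z r. r \<in> R \<Longrightarrow> z \<in> \<beta> r \<Longrightarrow> z \<notin> BP \<beta>"
      proof
        fix z r assume r: "r \<in> R" "z \<in> \<beta> r" and "z \<in> BP \<beta>"
        then obtain p where "p \<in> P" "z \<in> \<beta> p" unfolding BP_def by blast
        thus False using D[of p r] PV RV PnR r by blast
      qed
      have notZ: "\<And>z r. r \<in> R \<Longrightarrow> z \<in> \<beta> r \<Longrightarrow> z \<notin> Z"
      proof
        fix z r assume r: "r \<in> R" "z \<in> \<beta> r" and "z \<in> Z"
        then obtain q where "q \<in> Q" "z \<in> \<beta> q" using ZBQ unfolding BQ_def by blast
        thus False using D[of q r] QV RV QnR r by blast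
      qed
      have inVH: "x' \<in> VH" "y' \<in> VH" using model_sub[OF m r1V] model_sub[OF m r2V] x' y' by auto
      have xB: "x' \<in> B - A" "y' \<in> B - A"
        using inVH notBP[OF r(1) x'] notBP[OF r(2) y'] notZ[OF r(1) x'] notZ[OF r(2) y']
        unfolding A_def B_def by auto
      show ?thesis using nosep[OF H w4c sepAB ord xA(1) xA(2) xy xB(1) xB(2) xy'] by blast
    qed
  qed
qed

end
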